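(* Let $I$ be an ideal on a cardinal $\kappa$ and let $\theta$ be a regular cardinal. Then $I$ is $\theta$-decomposable (i.e. not $\theta$-indecomposable) if and only if there is a sequence $\langle A_i:i<\theta\rangle$ of $I$-positive subsets of $\kappa$ which are pairwise equal modulo $I$ and satisfy $\bigcap_{i<\theta}\bigcup_{i\leq j<\theta}A_j=\emptyset$.
   Context: By an ideal on a cardinal $\kappa$ we mean a proper ideal on $\kappa$ containing all bounded subsets of $\kappa$. $A$ is $I$-positive if $A\notin I$; $A,B$ are equal modulo $I$ if $A\setminus B\in I$ and $B\setminus A\in I$. $I$ is $\theta$-indecomposable if whenever $\langle A_i:i<\theta\rangle$ are subsets of $\kappa$ with $\bigcup_{i<\theta}A_i\notin I$, there is $w\subseteq\theta$ with $|w|<\theta$ and $\bigcup_{i\in w}A_i\notin I$. *)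

theory Defs
  imports Main
begin

text \<open>A cardinal kappa is represented by a cardinal well-order r (Card_order r);
  kappa is its field. Subsets of kappa are subsets of Field r.\<close>

definition bounded_in :: "'a rel \<Rightarrow> 'a set \<Rightarrow> bool" where
  "bounded_in r A \<longleftrightarrow> A \<subseteq> Field r \<and> (\<exists>\<alpha>\<in>Field r. \<forall>x\<in>A. (x, \<alpha>) \<in> r)"

definition is_ideal_on :: "'a rel \<Rightarrow> 'a set set \<Rightarrow> bool" where
  "is_ideal_on r I \<longleftrightarrow>
     (\<forall>X\<in>I. X \<subseteq> Field r) \<and>
     {} \<in> I \<and>
     (\<forall>X\<in>I. \<forall>Y. Y \<subseteq> X \<longrightarrow> Y \<in> I) \<and>
     (\<forall>X\<in>I. \<forall>Y\<in>I. X \<union> Y \<in> I) \<and>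
     Field r \<notin> I \<and>
     (\<forall>A. bounded_in r A \<longrightarrow> A \<in> I)"

text \<open>theta is represented by a cardinal well-order s; the index set is Field s.\<close>
definition indecomposable :: "'a rel \<Rightarrow> 'a set set \<Rightarrow> 'b rel \<Rightarrow> bool" where
  "indecomposable r I s \<longleftrightarrow>
     (\<forall>A :: 'b \<Rightarrow> 'a set.
        (\<forall>i\<in>Field s. A i \<subseteq> Field r) \<longrightarrow> (\<Union>i\<in>Field s. A i) \<notin> I \<longrightarrow>
        (\<exists>w. w \<subseteq> Field s \<and> (card_of w, s) \<in> ordLess \<and> (\<Union>i\<in>w. A i) \<notin> I))"

definition eq_mod :: "'a set set \<Rightarrow> 'a set \<Rightarrow> 'a set \<Rightarrow> bool" where
  "eq_mod I A B \<longleftrightarrow> A - B \<in> I \<and> B - A \<in> I"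

end

theory Submission
  imports Defs
begin

lemma wo_facts:
  assumes "Card_order s"
  shows "\<And>a. a \<in> Field s \<Longrightarrow> (a,a) \<in> s"
    and "\<And>a b c. (a,b) \<in> s \<Longrightarrow> (b,c) \<in> s \<Longrightarrow> (a,c) \<in> s"
    and "\<And>a b. (a,b) \<in> s \<Longrightarrow> (b,a) \<in> s \<Longrightarrow> a = b"
    and "\<And>a b. a \<in> Field s \<Longrightarrow> b \<in> Field s \<Longrightarrow> a \<noteq> b \<Longrightarrow> (a,b) \<in> s \<or> (b,a) \<in> s"
proof -
  have W: "Well_order s" using assms card_order_on_well_order_on by blast
  then show "\<And>a. a \<in> Field s \<Longrightarrow> (a,a) \<in> s"
    unfolding well_order_on_def linear_order_on_def partial_order_on_def preorder_on_def refl_on_def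
    by blast
  show "\<And>a b c. (a,b) \<in> s \<Longrightarrow> (b,c) \<in> s \<Longrightarrow> (a,c) \<in> s"
    using W unfolding well_order_on_def linear_order_on_def partial_order_on_def preorder_on_def trans_def
    by blast
  show "\<And>a b. (a,b) \<in> s \<Longrightarrow> (b,a) \<in> s \<Longrightarrow> a = b"
    using W unfolding well_order_on_def linear_order_on_def partial_order_on_def antisym_def
    by blast
  show "\<And>a b. a \<in> Field s \<Longrightarrow> b \<in> Field s \<Longrightarrow> a \<noteq> b \<Longrightarrow> (a,b) \<in> s \<or> (b,a) \<in> s"
    using W unfolding well_order_on_def linear_order_on_def total_on_def
    by blast
qed

theorem proposition2p2:
  fixes r :: "'a rel" and s :: "'b rel" and I :: "'a set set"
  assumes "Card_order r"
    and "is_ideal_on r I"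
    and "Card_order s" and "Cinfinite s" and "regularCard s"
  shows "\<not> indecomposable r I s \<longleftrightarrow>
    (\<exists>A :: 'b \<Rightarrow> 'a set.
       (\<forall>i\<in>Field s. A i \<subseteq> Field r \<and> A i \<notin> I) \<and>
       (\<forall>i\<in>Field s. \<forall>j\<in>Field s. eq_mod I (A i) (A j)) \<and>
       (\<Inter>i\<in>Field s. \<Union>j\<in>{j. (i, j) \<in> s}. A j) = {})"
proof -
  note refl = wo_facts(1)[OF assms(3)]
  note trans = wo_facts(2)[OF assms(3)]
  note anti = wo_facts(3)[OF assms(3)]
  note tot = wo_facts(4)[OF assms(3)]
  have down: "\<And>X Y. X \<in> I \<Longrightarrow> Y \<subseteq> X \<Longrightarrow> Y \<in> I"
    and un: "\<And>X Y. X \<in> I \<Longrightarrow> Y \<in> I \<Longrightarrow> X \<union> Y \<in> I"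
    using assms(2) unfolding is_ideal_on_def by blast+
  have inf: "infinite (Field s)" using assms(4) unfolding cinfinite_def by simp
  then obtain i0 where i0: "i0 \<in> Field s" by (metis finite.emptyI ex_in_conv)
  show ?thesis
  proof
    assume "\<not> indecomposable r I s"
    then obtain A :: "'b \<Rightarrow> 'a set" where
      A1: "\<forall>i\<in>Field s. A i \<subseteq> Field r" and A2: "(\<Union>i\<in>Field s. A i) \<notin> I"
      and A3: "\<And>w. w \<subseteq> Field s \<Longrightarrow> (card_of w, s) \<in> ordLess \<Longrightarrow> (\<Union>i\<in>w. A i) \<in> I"
      unfolding indecomposable_def by blast
    define U where "U = (\<Union>i\<in>Field s. A i)"
    define B where "B i = (\<Union>j\<in>underS s i. A j)" for i
    define C where "C i = U - B i" for i
    have BI: "B i \<in> I" if "i \<in> Field s" for i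
    proof -
      have "underS s i \<subseteq> Field s" unfolding underS_def Field_def by blast
      moreover have "(card_of (underS s i), s) \<in> ordLess" using card_of_underS[OF assms(3) that] .
      ultimately show ?thesis using A3 unfolding B_def by blast
    qed
    have "\<forall>i\<in>Field s. C i \<subseteq> Field r \<and> C i \<notin> I"
    proof
      fix i assume i: "i \<in> Field s"
      have "C i \<subseteq> Field r" using A1 unfolding C_def U_def by blast
      moreover have "C i \<notin> I"
      proof
        assume "C i \<in> I"
        then have "C i \<union> B i \<in> I" using un BI i by blast
        moreover have "U \<subseteq> C i \<union> B i" unfolding C_def by blast
        ultimately show False using down A2 unfolding U_def by blast
      qed
      ultimately show "C i \<subseteq> Field r \<and> C i \<notin> I" by blast
    qed
    moreover have "\<forall>i\<in>Field s. \<forall>j\<in>Field s. eq_mod I (C i) (C j)"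
    proof (intro ballI)
      fix i j assume i: "i \<in> Field s" and j: "j \<in> Field s"
      have "C i - C j \<subseteq> B j" "C j - C i \<subseteq> B i" unfolding C_def by blast+
      then show "eq_mod I (C i) (C j)" unfolding eq_mod_def using down BI i j by blast
    qed
    moreover have "(\<Inter>i\<in>Field s. \<Union>j\<in>{j. (i, j) \<in> s}. C j) = {}"
    proof (rule ccontr)
      assume "(\<Inter>i\<in>Field s. \<Union>j\<in>{j. (i, j) \<in> s}. C j) \<noteq> {}"
      then obtain x where x: "\<And>i. i \<in> Field s \<Longrightarrow> x \<in> (\<Union>j\<in>{j. (i, j) \<in> s}. C j)" by blast
      from x[OF i0] have "x \<in> U" unfolding C_def by blast
      then obtain k where k: "k \<in> Field s" "x \<in> A k" unfolding U_def by blast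
      obtain k' where k': "k' \<in> Field s" "k \<noteq> k'" "(k,k') \<in> s"
        using infinite_Card_order_limit[OF assms(3) inf k(1)] by blast
      from x[OF k'(1)] obtain j where j: "(k',j) \<in> s" "x \<in> C j" by blast
      have "(k,j) \<in> s" using trans k'(3) j(1) .
      moreover have "k \<noteq> j" using anti k' j by blast
      ultimately have "k \<in> underS s j" unfolding underS_def by blast
      then have "x \<in> B j" using k unfolding B_def by blast
      then show False using j unfolding C_def by blast
    qed
    ultimately show "\<exists>A :: 'b \<Rightarrow> 'a set.
       (\<forall>i\<in>Field s. A i \<subseteq> Field r \<and> A i \<notin> I) \<and>
       (\<forall>i\<in>Field s. \<forall>j\<in>Field s. eq_mod I (A i) (A j)) \<and>
       (\<Inter>i\<in>Field s. \<Union>j\<in>{j. (i, j) \<in> s}. A j) = {}" by blast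
  next
    assume "\<exists>A :: 'b \<Rightarrow> 'a set.
       (\<forall>i\<in>Field s. A i \<subseteq> Field r \<and> A i \<notin> I) \<and>
       (\<forall>i\<in>Field s. \<forall>j\<in>Field s. eq_mod I (A i) (A j)) \<and>
       (\<Inter>i\<in>Field s. \<Union>j\<in>{j. (i, j) \<in> s}. A j) = {}"
    then obtain A :: "'b \<Rightarrow> 'a set" where
      A1: "\<forall>i\<in>Field s. A i \<subseteq> Field r \<and> A i \<notin> I"
      and A2: "\<forall>i\<in>Field s. \<forall>j\<in>Field s. eq_mod I (A i) (A j)"
      and A3: "(\<Inter>i\<in>Field s. \<Union>j\<in>{j. (i, j) \<in> s}. A j) = {}" by blast
    define E where "E i = A i0 - (\<Union>j\<in>{j. (i, j) \<in> s}. A j)" for i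
    have E1: "\<forall>i\<in>Field s. E i \<subseteq> Field r" using A1 i0 unfolding E_def by blast
    have "(\<Union>i\<in>Field s. E i) = A i0"
    proof
      show "(\<Union>i\<in>Field s. E i) \<subseteq> A i0" unfolding E_def by blast
      show "A i0 \<subseteq> (\<Union>i\<in>Field s. E i)"
      proof
        fix x assume x: "x \<in> A i0"
        have "x \<notin> (\<Inter>i\<in>Field s. \<Union>j\<in>{j. (i, j) \<in> s}. A j)" using A3 by blast
        then obtain i where "i \<in> Field s" "x \<notin> (\<Union>j\<in>{j. (i, j) \<in> s}. A j)" by blast
        then show "x \<in> (\<Union>i\<in>Field s. E i)" using x unfolding E_def by blast
      qed
    qed
    then have E2: "(\<Union>i\<in>Field s. E i) \<notin> I" using A1 i0 by simp
    have E3: "(\<Union>i\<in>w. E i) \<in> I" if w: "w \<subseteq> Field s" "(card_of w, s) \<in> ordLess" for w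
    proof -
      have "\<not> cofinal w s"
      proof
        assume "cofinal w s"
        then have "(card_of w, s) \<in> ordIso" using assms(5) w(1) unfolding regularCard_def by blast
        then show False using w(2) not_ordLess_ordIso by blast
      qed
      then obtain a where a: "a \<in> Field s" "\<And>b. b \<in> w \<Longrightarrow> \<not> (a \<noteq> b \<and> (a,b) \<in> s)"
        unfolding cofinal_def by blast
      have ba: "(b,a) \<in> s" if "b \<in> w" for b
        using a(2)[OF that] tot[OF a(1)] refl[OF a(1)] w(1) that by blast
      have "(\<Union>i\<in>w. E i) \<subseteq> A i0 - A a"
        unfolding E_def using ba by blast
      moreover have "A i0 - A a \<in> I" using A2 i0 a(1) unfolding eq_mod_def by blast
      ultimately show ?thesis using down by blast
    qed
    show "\<not> indecomposable r I s"
      unfolding indecomposable_def using E1 E2 E3 by blast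
  qed
qed

end
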